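(* For every sufficiently small $\eta>0$ there exists $r>0$ such that, whenever $z_0\in\mathbb C$ satisfies $r/2<|z_0|<r$, the following hold. (a) For distinct pairs $(I,n),(I',n')\in\mathcal I$, the circles $\mathrm{im}(\gamma_{I,n})$ and $\mathrm{im}(\gamma_{I',n'})$ are disjoint. (b) For every $(I,n)\in\mathcal I$: - $a_i(z_0)\in B_{I,n}$ for all $i\in I$, and - $a_j(z_0)\notin B_{I,n}\cup\mathrm{im}(\gamma_{I,n})$ for all $j\notin I$.
   Context: Let $d\ge2$ and let $a_1,\dots,a_d\in\mathbb C[[x]]$ be distinct power series with positive radii of convergence. Let $e_{i,j}=v_x(a_i-a_j)$ be the $x$-adic valuation. Let $\mathcal I$ be the set of pairs $(I,n)$ such that: - $I\subseteq\{1,\dots,d\}$ has at least two elements, - $n\ge1$ is an integer, - $e_{i,j}\ge n$ for all distinct $i,j\in I$, and - $I$ is maximal among subsets with this property. For $n\ge1$ let $F_n:\mathbb C[[x]]\to\mathbb C[x]$ be the truncation $\sum_k c_kx^k\mapsto\sum_{k=0}^{n-1}c_kx^k$. For $(I,n)\in\mathcal I$ let $b_{I,n}$ be the common value of $F_n(a_i)$ for $i\in I$. Given $z_0$ and $\eta,r>0$, define: - $w_{I,n}=b_{I,n}(z_0)$; - the loop $\gamma_{I,n}(t)=w_{I,n}+r^{n-1}\eta e^{2\pi\sqrt{-1}t}$ for $t\in[0,1]$, with image the circle $\mathrm{im}(\gamma_{I,n})$; - the open disk $B_{I,n}=\{z\in\mathbb C: |z-w_{I,n}|<r^{n-1}\eta\}$.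 *)

theory Defs
  imports "HOL-Analysis.Analysis" "HOL-Computational_Algebra.Polynomial"
begin

text \<open>x-adic valuation of a_i - a_j (for distinct series this is the subdegree).\<close>
definition val_diff :: "(nat \<Rightarrow> complex fps) \<Rightarrow> nat \<Rightarrow> nat \<Rightarrow> nat" where
  "val_diff a i j = subdegree (a i - a j)"

definition trunc_fps :: "nat \<Rightarrow> complex fps \<Rightarrow> complex poly" where
  "trunc_fps n f = (\<Sum>k<n. monom (fps_nth f k) k)"

definition clusterCond :: "(nat \<Rightarrow> complex fps) \<Rightarrow> nat \<Rightarrow> nat set \<Rightarrow> bool" where
  "clusterCond a n I = (\<forall>i\<in>I. \<forall>j\<in>I. i \<noteq> j \<longrightarrow> val_diff a i j \<ge> n)"

definition cluster_pairs :: "nat \<Rightarrow> (nat \<Rightarrow> complex fps) \<Rightarrow> (nat set \<times> nat) set" where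
  "cluster_pairs d a = {(I, n). I \<subseteq> {1..d} \<and> 2 \<le> card I \<and> n \<ge> 1 \<and> clusterCond a n I \<and>
       (\<forall>J. I \<subseteq> J \<and> J \<subseteq> {1..d} \<and> clusterCond a n J \<longrightarrow> J = I)}"

definition b_poly :: "(nat \<Rightarrow> complex fps) \<Rightarrow> nat set \<Rightarrow> nat \<Rightarrow> complex poly" where
  "b_poly a I n = (THE b. \<forall>i\<in>I. trunc_fps n (a i) = b)"

definition w_center :: "(nat \<Rightarrow> complex fps) \<Rightarrow> nat set \<Rightarrow> nat \<Rightarrow> complex \<Rightarrow> complex" where
  "w_center a I n z0 = poly (b_poly a I n) z0"

definition gamma_loop :: "(nat \<Rightarrow> complex fps) \<Rightarrow> nat set \<Rightarrow> nat \<Rightarrow> complex \<Rightarrow> real \<Rightarrow> real \<Rightarrow> real \<Rightarrow> complex" where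
  "gamma_loop a I n z0 \<eta> r t = w_center a I n z0 + complex_of_real (r ^ (n - 1) * \<eta>) * exp (2 * pi * \<i> * complex_of_real t)"

definition B_disk :: "(nat \<Rightarrow> complex fps) \<Rightarrow> nat set \<Rightarrow> nat \<Rightarrow> complex \<Rightarrow> real \<Rightarrow> real \<Rightarrow> complex set" where
  "B_disk a I n z0 \<eta> r = ball (w_center a I n z0) (r ^ (n - 1) * \<eta>)"

end

theory Submission
  imports Defs
begin

lemma radius_pos_ball:
  fixes R :: ereal assumes "R > 0"
  shows "\<exists>\<rho>>0. ereal \<rho> < R"
proof -
  obtain z where "0 < ereal z" "ereal z < R" using ereal_dense2[OF assms] by blast
  thus ?thesis by (intro exI[of _ z]) auto
qed

lemma fps_split_eval:
  fixes g :: "complex fps"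
  assumes "\<And>k. k < N \<Longrightarrow> fps_nth g k = 0" and "norm z < fps_conv_radius g"
  shows "eval_fps g z = fps_nth g N * z ^ N + z ^ (Suc N) * eval_fps (fps_shift (Suc N) g) z"
proof -
  have eq: "g = fps_const (fps_nth g N) * fps_X ^ N + fps_X ^ (Suc N) * fps_shift (Suc N) g"
  proof (rule fps_ext)
    fix k
    show "fps_nth g k = fps_nth (fps_const (fps_nth g N) * fps_X ^ N + fps_X ^ (Suc N) * fps_shift (Suc N) g) k"
      using assms(1)[of k] by (cases "k < N"; cases "k = N") (auto simp del: power_Suc simp: fps_X_power_mult_nth)
  qed
  have "eval_fps g z = eval_fps (fps_const (fps_nth g N) * fps_X ^ N) z + eval_fps (fps_X ^ (Suc N) * fps_shift (Suc N) g) z"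
    apply (subst eq)
    apply (rule eval_fps_add)
    using fps_conv_radius_mult[of "fps_const (fps_nth g N)" "fps_X ^ N"]
      fps_conv_radius_mult[of "fps_X ^ (Suc N)" "fps_shift (Suc N) g"] assms(2)
    by (auto simp del: power_Suc intro: less_le_trans)
  also have "\<dots> = fps_nth g N * z ^ N + z ^ (Suc N) * eval_fps (fps_shift (Suc N) g) z"
  proof -
    have r1: "norm z < fps_conv_radius (fps_shift (Suc N) g)" using assms(2) by simp
    have "eval_fps (fps_const (fps_nth g N) * fps_X ^ N) z = fps_nth g N * z ^ N"
      by (subst eval_fps_mult) auto
    moreover have "eval_fps (fps_X ^ (Suc N) * fps_shift (Suc N) g) z = z ^ (Suc N) * eval_fps (fps_shift (Suc N) g) z"
      apply (subst eval_fps_mult)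
      using r1 by (simp_all only: fps_conv_radius_fps_X_power eval_fps_X_power) auto
    ultimately show ?thesis by simp
  qed
  finally show ?thesis .
qed

lemma L_main:
  fixes g :: "complex fps"
  assumes "fps_conv_radius g > 0" "\<And>k. k < N \<Longrightarrow> fps_nth g k = 0" "\<epsilon> > 0"
  shows "eventually (\<lambda>r. \<forall>z. norm z < r \<longrightarrow> norm (eval_fps g z - fps_nth g N * z ^ N) \<le> \<epsilon> * r ^ N) (at_right 0)"
proof -
  obtain \<rho> where \<rho>: "\<rho> > 0" "ereal \<rho> < fps_conv_radius g" using radius_pos_ball assms(1) by blast
  define h where "h = fps_shift (Suc N) g"
  have "continuous_on (cball 0 \<rho>) (eval_fps h)"
    apply (rule continuous_on_subset[OF continuous_on_eval_fps])
    proof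
    fix x :: complex assume "x \<in> cball 0 \<rho>"
    hence "ereal (norm x) \<le> ereal \<rho>" by auto
    hence "ereal (norm x) < fps_conv_radius g" using \<rho>(2) by (rule order.strict_trans1)
    thus "x \<in> eball 0 (fps_conv_radius h)" unfolding h_def by simp
  qed
  hence "compact (eval_fps h ` cball 0 \<rho>)" by (intro compact_continuous_image) auto
  hence "bounded (eval_fps h ` cball 0 \<rho>)" by (rule compact_imp_bounded)
  then obtain C where C0: "C > 0" "\<forall>y\<in>eval_fps h ` cball 0 \<rho>. norm y \<le> C"
    unfolding bounded_pos by blast
  have C: "C > 0" "\<And>z. z \<in> cball 0 \<rho> \<Longrightarrow> norm (eval_fps h z) \<le> C" using C0 by auto
  show ?thesis unfolding eventually_at_right_field
  proof (intro exI[of _ "min \<rho> (\<epsilon> / C)"] conjI allI impI)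
    show "0 < min \<rho> (\<epsilon> / C)" using \<rho> C assms by auto
    fix r :: real and z :: complex
    assume r: "0 < r" "r < min \<rho> (\<epsilon> / C)" and z: "norm z < r"
    show "norm (eval_fps g z - fps_nth g N * z ^ N) \<le> \<epsilon> * r ^ N"
    proof -
      have zr: "norm z < fps_conv_radius g" 
      proof -
        have "norm z < \<rho>" using z r by simp
        hence "ereal (norm z) < ereal \<rho>" by simp
        thus ?thesis using \<rho>(2) by (rule less_trans)
      qed
      have "eval_fps g z - fps_nth g N * z ^ N = z ^ (Suc N) * eval_fps h z"
        using fps_split_eval[OF assms(2) zr] by (simp add: h_def)
      hence "norm (eval_fps g z - fps_nth g N * z ^ N) = norm z ^ Suc N * norm (eval_fps h z)"
        by (simp add: norm_mult norm_power)
      also have "\<dots> \<le> r ^ Suc N * C"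
        apply (rule mult_mono)
        using z r C(2)[of z] by (auto simp del: power_Suc intro!: power_mono)
      also have "\<dots> = r ^ N * (r * C)" by simp
      also have "\<dots> \<le> r ^ N * \<epsilon>"
        using r C by (intro mult_left_mono) (auto simp: field_simps)
      finally show ?thesis by (simp add: mult.commute)
    qed
  qed
qed

lemma UL:
  fixes g :: "complex fps"
  assumes "fps_conv_radius g > 0" "\<And>k. k < n \<Longrightarrow> fps_nth g k = 0" "1 \<le> n" "\<epsilon> > 0"
  shows "eventually (\<lambda>r. \<forall>z. norm z < r \<longrightarrow> norm (eval_fps g z) \<le> \<epsilon> * r ^ (n - 1)) (at_right 0)"
proof -
  have ev: "eventually (\<lambda>r. \<forall>z. norm z < r \<longrightarrow> norm (eval_fps g z - fps_nth g (n - 1) * z ^ (n - 1)) \<le> \<epsilon> * r ^ (n - 1)) (at_right 0)"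
    by (rule L_main) (use assms in auto)
  from ev show ?thesis
    by eventually_elim (use assms(2)[of "n - 1"] assms(3) in simp)
qed

lemma LL:
  fixes g :: "complex fps"
  assumes "fps_conv_radius g > 0" "\<And>k. k < m \<Longrightarrow> fps_nth g k = 0" "\<epsilon> > 0"
  shows "eventually (\<lambda>r. \<forall>z. r / 2 < norm z \<and> norm z < r \<longrightarrow>
           (norm (fps_nth g m) / 2 ^ m - \<epsilon>) * r ^ m \<le> norm (eval_fps g z)) (at_right 0)"
proof -
  have ev: "eventually (\<lambda>r. \<forall>z. norm z < r \<longrightarrow> norm (eval_fps g z - fps_nth g m * z ^ m) \<le> \<epsilon> * r ^ m) (at_right 0)"
    by (rule L_main) (use assms in auto)
  show ?thesis
  using ev eventually_at_right_less[of "0::real"]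
proof eventually_elim
  case (elim r)
  show ?case
  proof (intro allI impI)
    fix z :: complex assume z: "r / 2 < norm z \<and> norm z < r"
    have "(r / 2) ^ m \<le> norm z ^ m" using z elim by (intro power_mono) auto
    hence "norm (fps_nth g m) * (r / 2) ^ m \<le> norm (fps_nth g m) * norm z ^ m"
      by (intro mult_left_mono) auto
    hence a: "norm (fps_nth g m) / 2 ^ m * r ^ m \<le> norm (fps_nth g m * z ^ m)"
      by (simp add: norm_mult norm_power power_divide)
    have b: "norm (fps_nth g m * z ^ m) \<le> norm (eval_fps g z) + norm (eval_fps g z - fps_nth g m * z ^ m)"
      using norm_triangle_ineq2[of "fps_nth g m * z ^ m" "eval_fps g z"]
        norm_minus_commute[of "fps_nth g m * z ^ m" "eval_fps g z"] by linarith
    have c: "norm (eval_fps g z - fps_nth g m * z ^ m) \<le> \<epsilon> * r ^ m" using elim z by blast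
    show "(norm (fps_nth g m) / 2 ^ m - \<epsilon>) * r ^ m \<le> norm (eval_fps g z)"
      using a b c by (simp add: algebra_simps)
  qed
qed
qed

definition tr :: "nat option \<Rightarrow> complex fps \<Rightarrow> complex fps" where
  "tr s f = (case s of None \<Rightarrow> f | Some n \<Rightarrow> fps_of_poly (trunc_fps n f))"

definition bel :: "nat option \<Rightarrow> nat \<Rightarrow> bool" where
  "bel s k = (case s of None \<Rightarrow> True | Some n \<Rightarrow> k < n)"

lemma coeff_trunc: "coeff (trunc_fps n f) k = (if k < n then fps_nth f k else 0)"
  unfolding trunc_fps_def by (auto simp: coeff_sum coeff_monom)

lemma tr_nth: "fps_nth (tr s f) k = (if bel s k then fps_nth f k else 0)"
  by (cases s) (auto simp: tr_def bel_def coeff_trunc)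

lemma tr_radius: "fps_conv_radius f \<le> fps_conv_radius (tr s f)"
  by (cases s) (auto simp: tr_def)

lemma eval_tr_Some: "eval_fps (tr (Some n) f) z = poly (trunc_fps n f) z"
  by (simp add: tr_def)

lemma eval_tr_None: "eval_fps (tr None f) z = eval_fps f z"
  by (simp add: tr_def)

lemma trunc_cong: "(\<And>k. k < n \<Longrightarrow> fps_nth f k = fps_nth g k) \<Longrightarrow> trunc_fps n f = trunc_fps n g"
  unfolding trunc_fps_def by (intro sum.cong) auto

lemma circle_img:
  assumes "r \<ge> 0" "\<eta> \<ge> 0" "u \<in> path_image (gamma_loop a I n z0 \<eta> r)"
  shows "norm (u - w_center a I n z0) = r ^ (n - 1) * \<eta>"
proof -
  obtain t where u: "u = gamma_loop a I n z0 \<eta> r t" using assms(3) unfolding path_image_def by auto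
  have e: "2 * pi * \<i> * complex_of_real t = \<i> * complex_of_real (2 * pi * t)" by simp
  have "norm (u - w_center a I n z0) = norm (complex_of_real (r ^ (n - 1) * \<eta>)) * norm (exp (2 * pi * \<i> * complex_of_real t))"
    unfolding u gamma_loop_def by (simp add: norm_mult)
  also have "\<dots> = r ^ (n - 1) * \<eta>" unfolding e norm_exp_i_times using assms by (simp only: norm_of_real mult_1_right) simp
  finally show ?thesis .
qed


theorem mainTheorem3:
  fixes d :: nat and a :: "nat \<Rightarrow> complex fps"
  assumes "d \<ge> 2"
    and "inj_on a {1..d}"
    and "\<And>i. i \<in> {1..d} \<Longrightarrow> fps_conv_radius (a i) > 0"
  shows "\<exists>\<eta>0>0. \<forall>\<eta>. 0 < \<eta> \<and> \<eta> < \<eta>0 \<longrightarrow>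
    (\<exists>r>0. \<forall>z0::complex. r / 2 < norm z0 \<and> norm z0 < r \<longrightarrow>
      (\<forall>p\<in>cluster_pairs d a. \<forall>q\<in>cluster_pairs d a. p \<noteq> q \<longrightarrow>
         path_image (gamma_loop a (fst p) (snd p) z0 \<eta> r) \<inter>
         path_image (gamma_loop a (fst q) (snd q) z0 \<eta> r) = {}) \<and>
      (\<forall>(I, n)\<in>cluster_pairs d a.
         (\<forall>i\<in>I. eval_fps (a i) z0 \<in> B_disk a I n z0 \<eta> r) \<and>
         (\<forall>j\<in>{1..d} - I. eval_fps (a j) z0 \<notin>
              B_disk a I n z0 \<eta> r \<union> path_image (gamma_loop a I n z0 \<eta> r))))"
proof -
  define D where "D = {1..d}"
  define S where "S = cluster_pairs d a"
  define e where "e i j = subdegree (a i - a j)" for i j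
  define agree where "agree n i j = (\<forall>k<n. fps_nth (a i) k = fps_nth (a j) k)" for n i j
  have finD: "finite D" by (simp add: D_def)
  have neq: "a i \<noteq> a j" if "i \<in> D" "j \<in> D" "i \<noteq> j" for i j
    using assms(2) that unfolding D_def inj_on_def by blast
  have e_iff: "n \<le> e i j \<longleftrightarrow> agree n i j" if "a i \<noteq> a j" for n i j
  proof
    assume "n \<le> e i j"
    show "agree n i j" unfolding agree_def
    proof (intro allI impI)
      fix k assume "k < n"
      hence "k < subdegree (a i - a j)" using \<open>n \<le> e i j\<close> by (simp add: e_def)
      hence "fps_nth (a i - a j) k = 0" by (rule nth_less_subdegree_zero)
      thus "fps_nth (a i) k = fps_nth (a j) k" by simp
    qed
  next
    assume "agree n i j"
    thus "n \<le> e i j" unfolding e_def using that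
      by (intro subdegree_geI) (auto simp: agree_def)
  qed
  have e_nz: "fps_nth (a i) (e i j) \<noteq> fps_nth (a j) (e i j)" if "a i \<noteq> a j" for i j
    using nth_subdegree_nonzero[of "a i - a j"] that by (auto simp: e_def)
  have agree_e: "agree (e i j) i j" if "a i \<noteq> a j" for i j using e_iff[OF that, of "e i j"] by simp
  have agree_sym: "agree n j i" if "agree n i j" for n i j using that by (auto simp: agree_def)
  have agree_trans: "agree n i k" if "agree n i j" "agree n j k" for n i j k
    using that by (auto simp: agree_def)
  have agree_mono: "agree n i j" if "agree n' i j" "n \<le> n'" for n n' i j
    using that by (auto simp: agree_def)
  have agree_refl: "agree n i i" for n i by (auto simp: agree_def)
  have cc: "clusterCond a n I \<longleftrightarrow> (\<forall>i\<in>I. \<forall>j\<in>I. agree n i j)" if "I \<subseteq> D" for n I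
  proof -
    have "(i \<noteq> j \<longrightarrow> n \<le> e i j) \<longleftrightarrow> agree n i j" if "i \<in> I" "j \<in> I" for i j
    proof (cases "i = j")
      case True thus ?thesis using agree_refl by simp
    next
      case False
      have "a i \<noteq> a j" using neq False that \<open>I \<subseteq> D\<close> by blast
      thus ?thesis using e_iff False by simp
    qed
    thus ?thesis unfolding clusterCond_def val_diff_def e_def[symmetric] by blast
  qed
  have Sm: "(I, n) \<in> S \<longleftrightarrow> I \<subseteq> D \<and> 2 \<le> card I \<and> 1 \<le> n \<and> clusterCond a n I \<and>
       (\<forall>J. I \<subseteq> J \<and> J \<subseteq> D \<and> clusterCond a n J \<longrightarrow> J = I)" for I n
    by (simp add: S_def D_def cluster_pairs_def)
  have maxl: "j \<in> I" if "(I, n) \<in> S" "i \<in> I" "j \<in> D" "agree n i j" for I n i j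
  proof -
    note hyp = that
    have I: "I \<subseteq> D" "clusterCond a n I" "\<forall>J. I \<subseteq> J \<and> J \<subseteq> D \<and> clusterCond a n J \<longrightarrow> J = I"
      using that(1) Sm by auto
    have IA: "\<forall>x\<in>I. \<forall>y\<in>I. agree n x y" using cc I by blast
    have "\<forall>x\<in>insert j I. \<forall>y\<in>insert j I. agree n x y"
    proof (intro ballI)
      fix x y assume xy: "x \<in> insert j I" "y \<in> insert j I"
      have jI: "agree n j y'" if "y' \<in> I" for y'
        using agree_trans[OF agree_sym[OF hyp(4)]] IA \<open>i \<in> I\<close> \<open>y' \<in> I\<close> by blast
      show "agree n x y"
      proof (cases "x = j")
        case True
        show ?thesis
        proof (cases "y = j")
          case True thus ?thesis using \<open>x = j\<close> agree_refl by simp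
        next
          case False thus ?thesis using \<open>x = j\<close> xy jI by simp
        qed
      next
        case False
        hence xI: "x \<in> I" using xy by simp
        show ?thesis
        proof (cases "y = j")
          case True thus ?thesis using xI jI[of x] agree_sym by blast
        next
          case False thus ?thesis using xI xy IA by simp
        qed
      qed
    qed
    hence "clusterCond a n (insert j I)" using cc I hyp(3) by auto
    hence "insert j I = I" using I hyp(3) by blast
    thus ?thesis by blast
  qed
  define P where "P = {(i, j). i \<in> D \<and> j \<in> D \<and> i \<noteq> j}"
  have finP: "finite P"
  proof (rule finite_subset)
    show "P \<subseteq> D \<times> D" unfolding P_def by auto
    show "finite (D \<times> D)" using finD by simp
  qed
  define M where "M = Max ((\<lambda>(i, j). e i j) ` P)"
  have eM: "e i j \<le> M" if "(i, j) \<in> P" for i j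
    unfolding M_def using finP that by (intro Max_ge) auto
  have two: "\<exists>i\<in>I. \<exists>j\<in>I. i \<noteq> j" if "2 \<le> card I" for I :: "nat set"
  proof (rule ccontr)
    assume "\<not> ?thesis"
    have "I \<noteq> {}" using that by auto
    then obtain i where "i \<in> I" by blast
    with \<open>\<not> ?thesis\<close> have "I \<subseteq> {i}" by blast
    hence "card I \<le> 1" using card_mono[of "{i}" I] by simp
    thus False using that by simp
  qed
  have nM: "1 \<le> n \<and> n \<le> M" if "(I, n) \<in> S" for I n
  proof -
    from that Sm have I: "I \<subseteq> D" "2 \<le> card I" "1 \<le> n" "clusterCond a n I" by auto
    then obtain i j where ij: "i \<in> I" "j \<in> I" "i \<noteq> j" using two by blast
    have "agree n i j" using cc I ij by blast
    hence "n \<le> e i j" using e_iff neq ij I by blast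
    also have "\<dots> \<le> M" using eM ij I unfolding P_def by auto
    finally show ?thesis using I by simp
  qed
  have wc: "w_center a I n z = poly (trunc_fps n (a i)) z" if "(I, n) \<in> S" "i \<in> I" for I n i z
  proof -
    from that Sm have I: "I \<subseteq> D" "clusterCond a n I" by auto
    have AI: "\<forall>x\<in>I. \<forall>y\<in>I. agree n x y" using cc[OF I(1)] I(2) by blast
    have tt: "\<forall>i'\<in>I. trunc_fps n (a i') = trunc_fps n (a i)"
    proof
      fix i' assume "i' \<in> I"
      hence "agree n i' i" using AI that(2) by blast
      thus "trunc_fps n (a i') = trunc_fps n (a i)" unfolding agree_def by (intro trunc_cong) blast
    qed
    have "(THE b. \<forall>i\<in>I. trunc_fps n (a i) = b) = trunc_fps n (a i)"
    proof (rule the_equality)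
      show "\<forall>i'\<in>I. trunc_fps n (a i') = trunc_fps n (a i)" by (rule tt)
      fix b assume "\<forall>i\<in>I. trunc_fps n (a i) = b"
      hence "trunc_fps n (a i) = b" using \<open>i \<in> I\<close> by (rule bspec)
      thus "b = trunc_fps n (a i)" by simp
    qed
    hence "b_poly a I n = trunc_fps n (a i)" unfolding b_poly_def .
    thus ?thesis by (simp add: w_center_def)
  qed
  define X where "X i j = norm (fps_nth (a i) (e i j) - fps_nth (a j) (e i j)) / 2 ^ e i j" for i j
  have Xpos: "X i j > 0" if "(i, j) \<in> P" for i j
  proof -
    have "a i \<noteq> a j" using that neq unfolding P_def by auto
    hence "fps_nth (a i) (e i j) - fps_nth (a j) (e i j) \<noteq> 0" using e_nz by simp
    thus ?thesis unfolding X_def by simp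
  qed
  have P12: "(1, 2) \<in> P" using assms(1) unfolding P_def D_def by auto
  define \<eta>0 where "\<eta>0 = Min ((\<lambda>(i, j). X i j / 4) ` P)"
  have \<eta>0_le: "\<eta>0 \<le> X i j / 4" if "(i, j) \<in> P" for i j
    unfolding \<eta>0_def using finP that by (intro Min_le) force+
  have \<eta>0_pos: "\<eta>0 > 0"
    unfolding \<eta>0_def using finP P12 Xpos by (subst Min_gr_iff) auto
  show ?thesis
  proof (rule exI[of _ \<eta>0], intro conjI allI impI)
    show "\<eta>0 > 0" by (rule \<eta>0_pos)
    fix \<eta> :: real assume \<eta>: "0 < \<eta> \<and> \<eta> < \<eta>0"
    have \<eta>X: "\<eta> < X i j / 4" if "(i, j) \<in> P" for i j using \<eta>0_le[OF that] \<eta> by linarith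
    define Op where "Op = insert None (Some ` {1..M})"
    have finO: "finite Op" by (simp add: Op_def)
    have Rpos: "fps_conv_radius (a i) > 0" if "i \<in> D" for i using assms(3) that by (simp add: D_def)
    have rad: "fps_conv_radius (tr s (a i) - tr t (a j)) > 0" if "i \<in> D" "j \<in> D" for i j s t
    proof -
      have "0 < min (fps_conv_radius (a i)) (fps_conv_radius (a j))" using Rpos that by simp
      also have "\<dots> \<le> min (fps_conv_radius (tr s (a i))) (fps_conv_radius (tr t (a j)))"
        using tr_radius by (intro min.mono) auto
      also have "\<dots> \<le> fps_conv_radius (tr s (a i) - tr t (a j))" by (rule fps_conv_radius_diff)
      finally show ?thesis .
    qed
    have bel_mono: "bel s k" if "bel s x" "k \<le> x" for s k x
      using that by (cases s) (auto simp: bel_def)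
    define Lw where "Lw = {(i, j, s, t). (i, j) \<in> P \<and> s \<in> Op \<and> t \<in> Op \<and> bel s (e i j) \<and> bel t (e i j)}"
    define Up where "Up = {(i, n, t). i \<in> D \<and> n \<in> {1..M} \<and> t \<in> Op \<and> (\<forall>k<n. bel t k)}"
    have finLw: "finite Lw"
    proof (rule finite_subset)
      show "Lw \<subseteq> D \<times> D \<times> Op \<times> Op" unfolding Lw_def P_def by auto
      show "finite (D \<times> D \<times> Op \<times> Op)" using finD finO by simp
    qed
    have finUp: "finite Up"
    proof (rule finite_subset)
      show "Up \<subseteq> D \<times> {1..M} \<times> Op" unfolding Up_def by auto
      show "finite (D \<times> {1..M} \<times> Op)" using finD finO by simp
    qed
    have ev1: "eventually (\<lambda>r. \<forall>y\<in>Lw. case y of (i, j, s, t) \<Rightarrow> \<forall>z. r / 2 < norm z \<and> norm z < r \<longrightarrow>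
        3 * \<eta> * r ^ e i j \<le> norm (eval_fps (tr s (a i) - tr t (a j)) z)) (at_right 0)"
    proof (rule eventually_ball_finite[OF finLw], rule ballI)
      fix y assume "y \<in> Lw"
      then obtain i j s t where y: "y = (i, j, s, t)" "(i, j) \<in> P" "s \<in> Op" "t \<in> Op"
        "bel s (e i j)" "bel t (e i j)" unfolding Lw_def by auto
      have ij: "i \<in> D" "j \<in> D" "a i \<noteq> a j" using y(2) neq unfolding P_def by auto
      define g where "g = tr s (a i) - tr t (a j)"
      have g0: "fps_nth g k = 0" if "k < e i j" for k
      proof -
        have "bel s k" "bel t k" using bel_mono y(5,6) that by auto
        moreover have "fps_nth (a i) k = fps_nth (a j) k" using agree_e[OF ij(3)] that unfolding agree_def by blast
        ultimately show ?thesis by (simp add: g_def tr_nth)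
      qed
      have gm: "norm (fps_nth g (e i j)) / 2 ^ e i j = X i j"
        using y(5,6) by (simp add: g_def tr_nth X_def)
      have "eventually (\<lambda>r. \<forall>z. r / 2 < norm z \<and> norm z < r \<longrightarrow>
           (norm (fps_nth g (e i j)) / 2 ^ (e i j) - X i j / 4) * r ^ (e i j) \<le> norm (eval_fps g z)) (at_right 0)"
        by (rule LL) (use rad[OF ij(1,2)] g0 Xpos[OF y(2)] in \<open>auto simp: g_def\<close>)
      thus "eventually (\<lambda>r. case y of (i, j, s, t) \<Rightarrow> \<forall>z. r / 2 < norm z \<and> norm z < r \<longrightarrow>
        3 * \<eta> * r ^ e i j \<le> norm (eval_fps (tr s (a i) - tr t (a j)) z)) (at_right 0)"
        using eventually_at_right_less[of "0::real"]
      proof eventually_elim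
        case (elim r)
        have "3 * \<eta> * r ^ e i j \<le> (X i j - X i j / 4) * r ^ e i j"
          using \<eta>X[OF y(2)] elim(2) by (intro mult_right_mono) auto
        moreover have "\<forall>z. r / 2 < norm z \<and> norm z < r \<longrightarrow>
           (X i j - X i j / 4) * r ^ (e i j) \<le> norm (eval_fps g z)" using elim(1) unfolding gm .
        ultimately have "\<forall>z. r / 2 < norm z \<and> norm z < r \<longrightarrow>
           3 * \<eta> * r ^ e i j \<le> norm (eval_fps g z)" by (meson order.trans)
        thus ?case unfolding y(1) g_def by simp
      qed
    qed
    have ev2: "eventually (\<lambda>r. \<forall>y\<in>Up. case y of (i, n, t) \<Rightarrow> \<forall>z. norm z < r \<longrightarrow>
        norm (eval_fps (tr t (a i) - tr (Some n) (a i)) z) \<le> \<eta> / 2 * r ^ (n - 1)) (at_right 0)"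
    proof (rule eventually_ball_finite[OF finUp], rule ballI)
      fix y assume "y \<in> Up"
      then obtain i n t where y: "y = (i, n, t)" "i \<in> D" "1 \<le> n" "t \<in> Op" "\<forall>k<n. bel t k"
        unfolding Up_def by auto
      have "eventually (\<lambda>r. \<forall>z. norm z < r \<longrightarrow>
        norm (eval_fps (tr t (a i) - tr (Some n) (a i)) z) \<le> \<eta> / 2 * r ^ (n - 1)) (at_right 0)"
        by (rule UL) (use rad[OF y(2) y(2)] y(3,5) \<eta> in \<open>auto simp: tr_nth bel_def\<close>)
      thus "eventually (\<lambda>r. case y of (i, n, t) \<Rightarrow> \<forall>z. norm z < r \<longrightarrow>
        norm (eval_fps (tr t (a i) - tr (Some n) (a i)) z) \<le> \<eta> / 2 * r ^ (n - 1)) (at_right 0)"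
        unfolding y(1) by simp
    qed
    have ev3: "eventually (\<lambda>r. \<forall>i\<in>D. ereal r < fps_conv_radius (a i)) (at_right 0)"
    proof (rule eventually_ball_finite[OF finD], rule ballI)
      fix i assume "i \<in> D"
      then obtain \<rho> where \<rho>: "\<rho> > 0" "ereal \<rho> < fps_conv_radius (a i)"
        using radius_pos_ball Rpos by blast
      show "eventually (\<lambda>r. ereal r < fps_conv_radius (a i)) (at_right 0)"
        unfolding eventually_at_right_field
      proof (rule exI[of _ \<rho>], intro conjI allI impI)
        show "\<rho> > 0" by (rule \<rho>(1))
        fix y :: real assume "y < \<rho>"
        hence "ereal y < ereal \<rho>" by simp
        thus "ereal y < fps_conv_radius (a i)" using \<rho>(2) by (rule less_trans)
      qed
    qed
    have ev4: "eventually (\<lambda>r. 0 < r \<and> r < 1 / 2) (at_right (0::real))"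
      unfolding eventually_at_right_field by (rule exI[of _ "1/2"]) auto
    have "eventually (\<lambda>r. (0 < r \<and> r < 1 / 2) \<and> (\<forall>i\<in>D. ereal r < fps_conv_radius (a i)) \<and>
       (\<forall>y\<in>Up. case y of (i, n, t) \<Rightarrow> \<forall>z. norm z < r \<longrightarrow>
        norm (eval_fps (tr t (a i) - tr (Some n) (a i)) z) \<le> \<eta> / 2 * r ^ (n - 1)) \<and>
       (\<forall>y\<in>Lw. case y of (i, j, s, t) \<Rightarrow> \<forall>z. r / 2 < norm z \<and> norm z < r \<longrightarrow>
        3 * \<eta> * r ^ e i j \<le> norm (eval_fps (tr s (a i) - tr t (a j)) z))) (at_right 0)"
      using ev1 ev2 ev3 ev4 by eventually_elim blast
    then obtain b where b: "b > 0" "\<And>y. y > 0 \<Longrightarrow> y < b \<Longrightarrow> (0 < y \<and> y < 1 / 2) \<and> (\<forall>i\<in>D. ereal y < fps_conv_radius (a i)) \<and>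
       (\<forall>x\<in>Up. case x of (i, n, t) \<Rightarrow> \<forall>z. norm z < y \<longrightarrow>
        norm (eval_fps (tr t (a i) - tr (Some n) (a i)) z) \<le> \<eta> / 2 * y ^ (n - 1)) \<and>
       (\<forall>x\<in>Lw. case x of (i, j, s, t) \<Rightarrow> \<forall>z. y / 2 < norm z \<and> norm z < y \<longrightarrow>
        3 * \<eta> * y ^ e i j \<le> norm (eval_fps (tr s (a i) - tr t (a j)) z))"
      unfolding eventually_at_right_field by blast
    define r where "r = b / 2"
    have r: "0 < r" "r < 1 / 2" and R3: "\<forall>i\<in>D. ereal r < fps_conv_radius (a i)"
      and R2: "\<forall>x\<in>Up. case x of (i, n, t) \<Rightarrow> \<forall>z. norm z < r \<longrightarrow>
        norm (eval_fps (tr t (a i) - tr (Some n) (a i)) z) \<le> \<eta> / 2 * r ^ (n - 1)"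
      and R1: "\<forall>x\<in>Lw. case x of (i, j, s, t) \<Rightarrow> \<forall>z. r / 2 < norm z \<and> norm z < r \<longrightarrow>
        3 * \<eta> * r ^ e i j \<le> norm (eval_fps (tr s (a i) - tr t (a j)) z)"
      using b(2)[of r] b(1) unfolding r_def by auto
    show "\<exists>r>0. \<forall>z0::complex. r / 2 < norm z0 \<and> norm z0 < r \<longrightarrow>
      (\<forall>p\<in>cluster_pairs d a. \<forall>q\<in>cluster_pairs d a. p \<noteq> q \<longrightarrow>
         path_image (gamma_loop a (fst p) (snd p) z0 \<eta> r) \<inter>
         path_image (gamma_loop a (fst q) (snd q) z0 \<eta> r) = {}) \<and>
      (\<forall>(I, n)\<in>cluster_pairs d a.
         (\<forall>i\<in>I. eval_fps (a i) z0 \<in> B_disk a I n z0 \<eta> r) \<and>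
         (\<forall>j\<in>{1..d} - I. eval_fps (a j) z0 \<notin>
              B_disk a I n z0 \<eta> r \<union> path_image (gamma_loop a I n z0 \<eta> r)))"
    proof (rule exI[of _ r], intro conjI allI impI)
      show "r > 0" by (rule r(1))
      fix z0 :: complex assume z0: "r / 2 < norm z0 \<and> norm z0 < r"
      have zR: "norm z0 < fps_conv_radius (tr s (a i))" if "i \<in> D" for i s
      proof -
        have "ereal (norm z0) < ereal r" using z0 by simp
        also have "\<dots> < fps_conv_radius (a i)" using R3 that by blast
        also have "\<dots> \<le> fps_conv_radius (tr s (a i))" by (rule tr_radius)
        finally show ?thesis .
      qed
      define V where "V s i = eval_fps (tr s (a i)) z0" for s i
      have evd: "eval_fps (tr s (a i) - tr t (a j)) z0 = V s i - V t j" if "i \<in> D" "j \<in> D" for i j s t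
        unfolding V_def by (rule eval_fps_diff) (use zR that in auto)
      have VN: "V None i = eval_fps (a i) z0" for i by (simp add: V_def tr_def)
      have wc': "w_center a I n z0 = V (Some n) i" if "(I, n) \<in> S" "i \<in> I" for I n i
        using wc[OF that] by (simp add: V_def eval_tr_Some)
      have NoneOp: "None \<in> Op" by (simp add: Op_def)
      have SomeOp: "Some n \<in> Op" if "1 \<le> n" "n \<le> M" for n using that by (simp add: Op_def)
      have Low: "3 * \<eta> * r ^ e i j \<le> norm (V s i - V t j)"
        if "(i, j) \<in> P" "s \<in> Op" "t \<in> Op" "bel s (e i j)" "bel t (e i j)" for i j s t
      proof -
        have "(i, j, s, t) \<in> Lw" using that unfolding Lw_def by auto
        with R1 have "case (i, j, s, t) of (i, j, s, t) \<Rightarrow> \<forall>z. r / 2 < norm z \<and> norm z < r \<longrightarrow>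
          3 * \<eta> * r ^ e i j \<le> norm (eval_fps (tr s (a i) - tr t (a j)) z)" by (rule bspec)
        hence "\<forall>z. r / 2 < norm z \<and> norm z < r \<longrightarrow>
          3 * \<eta> * r ^ e i j \<le> norm (eval_fps (tr s (a i) - tr t (a j)) z)" by simp
        hence "3 * \<eta> * r ^ e i j \<le> norm (eval_fps (tr s (a i) - tr t (a j)) z0)"
          using z0 by blast
        moreover have "i \<in> D" "j \<in> D" using that(1) unfolding P_def by auto
        ultimately show ?thesis using evd by simp
      qed
      have Upb: "norm (V t i - V (Some n) i) \<le> \<eta> / 2 * r ^ (n - 1)"
        if "i \<in> D" "1 \<le> n" "n \<le> M" "t \<in> Op" "\<forall>k<n. bel t k" for i n t
      proof -
        have "(i, n, t) \<in> Up" using that unfolding Up_def by auto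
        with R2 have "case (i, n, t) of (i, n, t) \<Rightarrow> \<forall>z. norm z < r \<longrightarrow>
          norm (eval_fps (tr t (a i) - tr (Some n) (a i)) z) \<le> \<eta> / 2 * r ^ (n - 1)" by (rule bspec)
        hence "norm (eval_fps (tr t (a i) - tr (Some n) (a i)) z0) \<le> \<eta> / 2 * r ^ (n - 1)"
          using z0 by simp
        thus ?thesis using evd[OF that(1) that(1)] by simp
      qed
      have pw: "r ^ m \<le> r ^ k" if "k \<le> m" for k m
        using r by (intro power_decreasing that) auto
      have rpos: "r ^ k > 0" for k using r by simp
      have SD: "I \<subseteq> D" if "(I, n) \<in> S" for I n using that Sm[of I n] by simp
      have ne: "\<exists>i. i \<in> I" if "(I, n) \<in> S" for I n
      proof -
        have "2 \<le> card I" using that Sm[of I n] by simp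
        thus ?thesis using two[of I] by blast
      qed
      have AI: "\<forall>x\<in>I. \<forall>y\<in>I. agree n x y" if "(I, n) \<in> S" for I n
      proof -
        have "I \<subseteq> D" "clusterCond a n I" using that Sm[of I n] by simp_all
        thus ?thesis using cc by simp
      qed
      show "\<forall>p\<in>cluster_pairs d a. \<forall>q\<in>cluster_pairs d a. p \<noteq> q \<longrightarrow>
         path_image (gamma_loop a (fst p) (snd p) z0 \<eta> r) \<inter>
         path_image (gamma_loop a (fst q) (snd q) z0 \<eta> r) = {}"
      proof -
        have nest: False
          if p: "(I, n) \<in> S" "(I', n') \<in> S" "(I, n) \<noteq> (I', n')" "n \<le> n'" "i \<in> I" "i' \<in> I'"
            "agree n i i'" "norm (u - w_center a I n z0) = r ^ (n - 1) * \<eta>"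
            "norm (u - w_center a I' n' z0) = r ^ (n' - 1) * \<eta>" for I n I' n' i i' u
        proof -
          have i'D: "i' \<in> D" using SD[OF p(2)] p(6) by blast
          have sub: "I' \<subseteq> I"
          proof
            fix k assume k: "k \<in> I'"
            have "agree n' i' k" using AI[OF p(2)] p(6) k by blast
            hence "agree n i' k" using p(4) agree_mono by blast
            hence "agree n i k" using agree_trans[OF p(7)] by blast
            moreover have "k \<in> D" using SD[OF p(2)] k by blast
            ultimately show "k \<in> I" using maxl[OF p(1) p(5)] by blast
          qed
          have nn: "n < n'"
          proof (rule ccontr)
            assume "\<not> n < n'"
            hence eq: "n' = n" using p(4) by simp
            have "I \<subseteq> I'"
            proof
              fix k assume k: "k \<in> I"
              have "agree n i k" using AI[OF p(1)] p(5) k by blast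
              hence "agree n' i' k" using agree_trans[OF agree_sym[OF p(7)]] eq by blast
              moreover have "k \<in> D" using SD[OF p(1)] k by blast
              ultimately show "k \<in> I'" using maxl[OF p(2) p(6)] by blast
            qed
            thus False using sub eq p(3) by blast
          qed
          have n1: "1 \<le> n" "n \<le> M" using nM[OF p(1)] by auto
          have n2: "n' \<le> M" using nM[OF p(2)] by auto
          have w: "w_center a I n z0 = V (Some n) i'" using wc'[OF p(1)] sub p(6) by blast
          have w': "w_center a I' n' z0 = V (Some n') i'" using wc'[OF p(2) p(6)] .
          have "norm (V (Some n') i' - V (Some n) i') \<le> \<eta> / 2 * r ^ (n - 1)"
            by (rule Upb) (use i'D n1 n2 nn SomeOp[of n'] in \<open>auto simp: bel_def\<close>)
          moreover have "r ^ (n' - 1) \<le> r ^ n" using pw[of n "n' - 1"] nn by simp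
          moreover have "r ^ n = r * r ^ (n - 1)" using n1 by (cases n) auto
          moreover have "r * r ^ (n - 1) < r ^ (n - 1) / 2" using r rpos[of "n - 1"] by simp
          ultimately have h0: "norm (V (Some n') i' - V (Some n) i') \<le> \<eta> / 2 * r ^ (n - 1)"
            and "r ^ (n' - 1) < r ^ (n - 1) / 2" by linarith+
          hence "r ^ (n' - 1) * \<eta> < r ^ (n - 1) / 2 * \<eta>" using \<eta> by (intro mult_strict_right_mono) auto
          hence A: "norm (w_center a I' n' z0 - w_center a I n z0) + r ^ (n' - 1) * \<eta> < r ^ (n - 1) * \<eta>"
            unfolding w w' using h0 by (simp add: field_simps)
          have "norm (u - w_center a I n z0) \<le> norm (u - w_center a I' n' z0) + norm (w_center a I' n' z0 - w_center a I n z0)"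
            by (rule norm_diff_triangle_le[of _ "w_center a I' n' z0"]) simp_all
          thus False using A p(8,9) by simp
        qed
        show ?thesis
        proof (intro ballI impI)
          fix p q assume pq: "p \<in> cluster_pairs d a" "q \<in> cluster_pairs d a" "p \<noteq> q"
          obtain I n where pI: "p = (I, n)" by (cases p)
          obtain I' n' where qI: "q = (I', n')" by (cases q)
          have pS: "(I, n) \<in> S" and qS: "(I', n') \<in> S" and ne2: "(I, n) \<noteq> (I', n')"
            using pq pI qI by (auto simp: S_def)
          show "path_image (gamma_loop a (fst p) (snd p) z0 \<eta> r) \<inter>
             path_image (gamma_loop a (fst q) (snd q) z0 \<eta> r) = {}"
          proof (rule ccontr)
            assume "\<not> ?thesis"
            then obtain u where u: "u \<in> path_image (gamma_loop a I n z0 \<eta> r)"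
              "u \<in> path_image (gamma_loop a I' n' z0 \<eta> r)" unfolding pI qI by auto
            have cu: "norm (u - w_center a I n z0) = r ^ (n - 1) * \<eta>"
              "norm (u - w_center a I' n' z0) = r ^ (n' - 1) * \<eta>"
              using circle_img[OF _ _ u(1)] circle_img[OF _ _ u(2)] r \<eta> by auto
            obtain i where i: "i \<in> I" using ne[OF pS] by blast
            obtain i' where i': "i' \<in> I'" using ne[OF qS] by blast
            show False
            proof (cases "agree (min n n') i i'")
              case True
              show False
              proof (cases "n \<le> n'")
                case True
                thus False using nest[OF pS qS ne2 True i i' _ cu] \<open>agree (min n n') i i'\<close> by simp
              next
                case False
                hence "n' \<le> n" by simp
                moreover have "agree n' i' i" using agree_sym \<open>agree (min n n') i i'\<close> False by simp
                ultimately show False using nest[OF qS pS _ _ i' i _ cu(2) cu(1)] ne2 by auto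
              qed
            next
              case False
              have ii: "i \<noteq> i'" using False agree_refl by blast
              have iD: "i \<in> D" "i' \<in> D" using SD pS qS i i' by blast+
              have aii: "a i \<noteq> a i'" using neq iD ii by blast
              have en: "e i i' < min n n'" using e_iff[OF aii, of "min n n'"] False by (simp only: not_le[symmetric]) simp
              have n1: "1 \<le> n" "n \<le> M" "1 \<le> n'" "n' \<le> M" using nM[OF pS] nM[OF qS] by auto
              have L: "3 * \<eta> * r ^ e i i' \<le> norm (V (Some n) i - V (Some n') i')"
                by (rule Low) (use iD ii en SomeOp n1 in \<open>auto simp: P_def bel_def\<close>)
              have w: "w_center a I n z0 = V (Some n) i" "w_center a I' n' z0 = V (Some n') i'"
                using wc'[OF pS i] wc'[OF qS i'] by auto
              have "norm (V (Some n) i - V (Some n') i') \<le> norm (u - V (Some n) i) + norm (u - V (Some n') i')"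
                using norm_triangle_ineq4[of "u - V (Some n') i'" "u - V (Some n) i"]
                by (simp add: norm_minus_commute algebra_simps)
              moreover have "r ^ (n - 1) * \<eta> \<le> r ^ e i i' * \<eta>" "r ^ (n' - 1) * \<eta> \<le> r ^ e i i' * \<eta>"
                using pw en \<eta> by (auto intro!: mult_right_mono)
              moreover have "norm (u - V (Some n) i) = r ^ (n - 1) * \<eta>" "norm (u - V (Some n') i') = r ^ (n' - 1) * \<eta>"
                using cu w by auto
              ultimately have "norm (V (Some n) i - V (Some n') i') \<le> 2 * (r ^ e i i' * \<eta>)"
                by linarith
              moreover have "0 < r ^ e i i' * \<eta>" using rpos[of "e i i'"] \<eta> by simp
              moreover have "3 * \<eta> * r ^ e i i' = 3 * (r ^ e i i' * \<eta>)" by simp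
              ultimately show False using L by linarith
            qed
          qed
        qed
      qed
      have bpart: "\<forall>x\<in>S. case x of (I, n) \<Rightarrow>
         (\<forall>i\<in>I. eval_fps (a i) z0 \<in> B_disk a I n z0 \<eta> r) \<and>
         (\<forall>j\<in>{1..d} - I. eval_fps (a j) z0 \<notin>
              B_disk a I n z0 \<eta> r \<union> path_image (gamma_loop a I n z0 \<eta> r))"
      proof
        fix x assume "x \<in> S"
        then obtain I n where x: "x = (I, n)" "(I, n) \<in> S" by (cases x) auto
        have n: "1 \<le> n" "n \<le> M" using nM[OF x(2)] by auto
        have b1: "eval_fps (a i) z0 \<in> B_disk a I n z0 \<eta> r" if "i \<in> I" for i
        proof -
          have iD: "i \<in> D" using SD[OF x(2)] that by blast
          have "norm (V None i - V (Some n) i) \<le> \<eta> / 2 * r ^ (n - 1)"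
            by (rule Upb) (use iD n NoneOp in \<open>auto simp: bel_def\<close>)
          also have "\<dots> < r ^ (n - 1) * \<eta>" using rpos[of "n - 1"] \<eta> by simp
          finally show ?thesis unfolding B_disk_def mem_ball dist_norm
            using wc'[OF x(2) that] VN by (simp add: norm_minus_commute)
        qed
        have b2: "eval_fps (a j) z0 \<notin> B_disk a I n z0 \<eta> r \<union> path_image (gamma_loop a I n z0 \<eta> r)"
          if "j \<in> {1..d} - I" for j
        proof -
          obtain i where i: "i \<in> I" using ne[OF x(2)] by blast
          have iD: "i \<in> D" using SD[OF x(2)] i by blast
          have jD: "j \<in> D" "j \<notin> I" using that by (auto simp: D_def)
          have na: "\<not> agree n i j" using maxl[OF x(2) i jD(1)] jD(2) by blast
          have ij: "i \<noteq> j" using i jD by blast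
          have aij: "a i \<noteq> a j" using neq iD jD ij by blast
          have en: "e i j < n" using e_iff[OF aij, of n] na by simp
          have "3 * \<eta> * r ^ e i j \<le> norm (V (Some n) i - V None j)"
            by (rule Low) (use iD jD ij SomeOp[OF n] NoneOp en in \<open>auto simp: P_def bel_def\<close>)
          moreover have "r ^ (n - 1) * \<eta> \<le> r ^ e i j * \<eta>" using pw[of "e i j" "n - 1"] en \<eta>
            by (intro mult_right_mono) auto
          moreover have "r ^ e i j * \<eta> < 3 * \<eta> * r ^ e i j" using rpos[of "e i j"] \<eta> by simp
          moreover have "norm (V (Some n) i - V None j) = norm (eval_fps (a j) z0 - w_center a I n z0)"
            using wc'[OF x(2) i] VN by (simp add: norm_minus_commute)
          ultimately have gt: "r ^ (n - 1) * \<eta> < norm (eval_fps (a j) z0 - w_center a I n z0)"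
            by (simp add: mult.commute mult.left_commute)
          show ?thesis
          proof
            assume "eval_fps (a j) z0 \<in> B_disk a I n z0 \<eta> r \<union> path_image (gamma_loop a I n z0 \<eta> r)"
            thus False
            proof
              assume "eval_fps (a j) z0 \<in> B_disk a I n z0 \<eta> r"
              thus False using gt unfolding B_disk_def mem_ball dist_norm by (simp add: norm_minus_commute)
            next
              assume "eval_fps (a j) z0 \<in> path_image (gamma_loop a I n z0 \<eta> r)"
              from circle_img[OF _ _ this] r \<eta> gt show False by simp
            qed
          qed
        qed
        show "case x of (I, n) \<Rightarrow>
         (\<forall>i\<in>I. eval_fps (a i) z0 \<in> B_disk a I n z0 \<eta> r) \<and>
         (\<forall>j\<in>{1..d} - I. eval_fps (a j) z0 \<notin>
              B_disk a I n z0 \<eta> r \<union> path_image (gamma_loop a I n z0 \<eta> r))"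
          using b1 b2 x(1) by simp
      qed
      thus "\<forall>(I, n)\<in>cluster_pairs d a.
         (\<forall>i\<in>I. eval_fps (a i) z0 \<in> B_disk a I n z0 \<eta> r) \<and>
         (\<forall>j\<in>{1..d} - I. eval_fps (a j) z0 \<notin>
              B_disk a I n z0 \<eta> r \<union> path_image (gamma_loop a I n z0 \<eta> r))"
        unfolding S_def .
    qed
  qed
qed
end
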